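(* Let $U$ be Haar distributed on $\mathbb U(n)$, $n\ge 2$, and for $1\le p,q\le n$ let $T_{p,q}=\sum_{i\le p,\,j\le q}|U_{ij}|^2$. For all $1\le p,p',q,q'\le n$, $$\operatorname{Cov}(T_{p,q},T_{p',q'})=\frac{(p\wedge p')(q\wedge q')}{n^2-1}-\frac{(p\wedge p')\,qq'}{n(n^2-1)}-\frac{pp'\,(q\wedge q')}{n(n^2-1)}+\frac{pp'qq'}{n^2(n^2-1)}.$$ In particular, if $p/n\to s$, $q/n\to t$, $p'/n\to s'$, $q'/n\to t'$, then $\operatorname{Cov}(T_{p,q},T_{p',q'})\to(s\wedge s'-ss')(t\wedge t'-tt')$. *)

theory Defs
  imports "HOL-Probability.Probability"
begin

text \<open>Matrices in M_n(C) are complex^'n^'n; the dimension is n = CARD('n).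
  The index type is linearly ordered so that "the first p rows" makes sense.\<close>

definition conj_transpose :: "complex^'n^'m \<Rightarrow> complex^'m^'n" where
  "conj_transpose U = (\<chi> i j. cnj (U $ j $ i))"

definition unitary_mat :: "complex^'n^'n \<Rightarrow> bool" where
  "unitary_mat U \<longleftrightarrow> U ** conj_transpose U = mat 1 \<and> conj_transpose U ** U = mat 1"

text \<open>Haar (probability) measure on the compact group U(n), viewed as a Borel
  probability measure on complex n x n matrices concentrated on U(n) and invariant
  under left multiplication by unitary matrices (unique such measure).\<close>
definition haar_unitary :: "(complex^'n^'n) measure \<Rightarrow> bool" where
  "haar_unitary M \<longleftrightarrow> prob_space M \<and> sets M = sets borel \<and>
     (AE U in M. unitary_mat U) \<and>
     (\<forall>V. unitary_mat V \<longrightarrow> distr M M (\<lambda>U. V ** U) = M)"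

text \<open>0-based position of an index in the linear order of the finite index type.\<close>
definition idx :: "'n::{finite,linorder} \<Rightarrow> nat" where
  "idx i = card {j. j < i}"

text \<open>T_{p,q}(U) = sum over i <= p, j <= q of |U_ij|^2 (1-based), i.e. the first p rows
  and first q columns.\<close>
definition T_block :: "nat \<Rightarrow> nat \<Rightarrow> complex^('n::{finite,linorder})^('n::{finite,linorder}) \<Rightarrow> real" where
  "T_block p q U = (\<Sum>i\<in>{i. idx i < p}. \<Sum>j\<in>{j. idx j < q}. (cmod (U $ i $ j))\<^sup>2)"

definition covariance :: "'a measure \<Rightarrow> ('a \<Rightarrow> real) \<Rightarrow> ('a \<Rightarrow> real) \<Rightarrow> real" where
  "covariance M X Y =
     integral\<^sup>L M (\<lambda>x. (X x - integral\<^sup>L M X) * (Y x - integral\<^sup>L M Y))"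

definition cov_formula :: "nat \<Rightarrow> nat \<Rightarrow> nat \<Rightarrow> nat \<Rightarrow> nat \<Rightarrow> real" where
  "cov_formula n p q p' q' =
     real (min p p') * real (min q q') / (real n ^ 2 - 1)
     - real (min p p') * real q * real q' / (real n * (real n ^ 2 - 1))
     - real p * real p' * real (min q q') / (real n * (real n ^ 2 - 1))
     + real p * real p' * real q * real q' / (real n ^ 2 * (real n ^ 2 - 1))"

end

theory Submission
  imports Defs
begin

lemma conj_transpose_mult: "conj_transpose (A ** B) = conj_transpose B ** conj_transpose A"
  by (simp add: conj_transpose_def matrix_matrix_mult_def vec_eq_iff mult.commute)

lemma conj_transpose_conj_transpose[simp]: "conj_transpose (conj_transpose A) = A"
  by (simp add: conj_transpose_def vec_eq_iff)

lemma unitaryI: fixes V :: "complex^'n^'n" assumes "V ** conj_transpose V = mat 1" shows "unitary_mat V"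
  using assms matrix_left_right_inverse unfolding unitary_mat_def by blast

lemma unitary_mult: assumes "unitary_mat A" "unitary_mat B" shows "unitary_mat (A ** B)"
proof (rule unitaryI)
  have "A ** B ** conj_transpose (A ** B) = A ** (B ** conj_transpose B) ** conj_transpose A"
    by (simp add: conj_transpose_mult matrix_mul_assoc)
  also have "\<dots> = mat 1" using assms by (simp add: unitary_mat_def)
  finally show "A ** B ** conj_transpose (A ** B) = mat 1" .
qed

lemma unitary_col: assumes "unitary_mat U"
  shows "(\<Sum>i\<in>UNIV. cnj (U $ i $ j) * U $ i $ l) = (if j = l then 1 else 0)"
proof -
  have "(conj_transpose U ** U) $ j $ l = (if j = l then 1 else 0)"
    using assms by (simp add: unitary_mat_def mat_def)
  thus ?thesis by (simp add: conj_transpose_def matrix_matrix_mult_def)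
qed

lemma unitary_colnorm: assumes "unitary_mat U"
  shows "(\<Sum>i\<in>UNIV. (cmod (U $ i $ j))\<^sup>2) = 1"
proof -
  have "complex_of_real (\<Sum>i\<in>UNIV. (cmod (U $ i $ j))\<^sup>2) = (\<Sum>i\<in>UNIV. cnj (U $ i $ j) * U $ i $ j)"
    by (simp only: of_real_sum complex_norm_square mult.commute)
  also have "\<dots> = 1" using unitary_col[OF assms, of j j] by simp
  finally show ?thesis by (metis of_real_eq_1_iff)
qed

lemma unitary_entry_le: assumes "unitary_mat U" shows "cmod (U $ i $ j) \<le> 1"
proof -
  have "(cmod (U $ i $ j))\<^sup>2 \<le> (\<Sum>i\<in>UNIV. (cmod (U $ i $ j))\<^sup>2)"
    by (rule member_le_sum) auto
  hence "(cmod (U $ i $ j))\<^sup>2 \<le> 1" using unitary_colnorm[OF assms] by simp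
  thus ?thesis by (simp add: power_le_one_iff abs_le_square_iff)
qed


definition sq2 :: complex where "sq2 = complex_of_real (sqrt 2)"

lemma sq2_sq: "sq2 * sq2 = 2" by (simp add: sq2_def flip: of_real_mult)
lemma sq2_nz[simp]: "sq2 \<noteq> 0" by (simp add: sq2_def)
lemma cnj_sq2[simp]: "cnj sq2 = sq2" by (simp add: sq2_def)

definition rot :: "'n \<Rightarrow> 'n \<Rightarrow> complex \<Rightarrow> complex^'m^'n \<Rightarrow> complex^'m^'n" where
"rot i k w U = (\<chi> r s. if r = i then (U$i$s + w * U$k$s)/sq2
   else if r = k then (- cnj w * U$i$s + U$k$s)/sq2 else U$r$s)"

lemma delta3: fixes U :: "complex^'m^'n::finite"
  shows "(\<Sum>t\<in>UNIV. ((if a = t then 1 else 0) * x + (if b = t then 1 else 0) * y + (if c = t then 1 else 0) * z) * U $ t $ s)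
     = x * U $ a $ s + y * U $ b $ s + z * U $ c $ s"
  by (simp add: ring_distribs sum.distrib if_distrib[where f="\<lambda>x. x * _"] cong: if_cong)

lemma rot_ent: "(rot i k w (mat 1) :: complex^'n^'n) $ r $ t =
   (if i = t then 1 else 0) * (if r = i then 1/sq2 else if r = k then - cnj w/sq2 else 0)
 + (if k = t then 1 else 0) * (if r = i then w/sq2 else if r = k then 1/sq2 else 0)
 + (if r = t then 1 else 0) * (if r = i \<or> r = k then 0 else 1)"
  by (auto simp: rot_def mat_def add_divide_distrib)

lemma rot_mult: fixes U :: "complex^'m^'n::finite"
  shows "rot i k w U = rot i k w (mat 1) ** U"
  unfolding vec_eq_iff matrix_matrix_mult_def
  by (auto simp: rot_ent delta3) (auto simp: rot_def field_simps)

lemma rot_cont: "continuous_on UNIV (rot i k w :: complex^'m^'n \<Rightarrow> _)"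
  unfolding rot_def
proof (intro continuous_on_vec_lambda)
  fix r s
  show "continuous_on UNIV (\<lambda>U::complex^'m^'n. if r = i then (U$i$s + w * U$k$s)/sq2
   else if r = k then (- cnj w * U$i$s + U$k$s)/sq2 else U$r$s)"
    by (cases "r = i"; cases "r = k") (auto intro!: continuous_intros)
qed

lemma rot_unitary: assumes "i \<noteq> k" "w * cnj w = 1"
  shows "unitary_mat (rot i k w (mat 1) :: complex^'n::finite^'n)"
proof (rule unitaryI)
  let ?V = "rot i k w (mat 1) :: complex^'n^'n"
  have "?V ** conj_transpose ?V = rot i k w (conj_transpose ?V)" by (rule rot_mult[symmetric])
  also have "\<dots> = mat 1"
  proof -
    have w2: "cnj w * w = 1" using assms(2) by (simp add: mult.commute)
    have h: "1/sq2 + 1/sq2 = sq2" by (simp add: field_simps sq2_sq)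
    { fix r s :: 'n
      have "rot i k w (conj_transpose ?V) $ r $ s = mat 1 $ r $ s"
        using assms(1)
        by (cases "r = i"; cases "r = k"; cases "s = i"; cases "s = k";
            simp add: rot_def conj_transpose_def mat_def assms(2) w2 h) }
    thus ?thesis by (simp add: vec_eq_iff)
  qed
  finally show "?V ** conj_transpose ?V = mat 1" .
qed


lemma P1: fixes a b :: complex shows
 "(cmod ((a + 1 * b)/sq2))\<^sup>2 + (cmod ((a + (-1) * b)/sq2))\<^sup>2 + (cmod ((a + \<i> * b)/sq2))\<^sup>2 + (cmod ((a + (-\<i>) * b)/sq2))\<^sup>2
  = 2 * ((cmod a)\<^sup>2 + (cmod b)\<^sup>2)"
proof -
  have d: "\<And>z. (cmod (z/sq2))\<^sup>2 = (cmod z)\<^sup>2 / 2"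
    by (simp add: norm_divide sq2_def power_divide)
  show ?thesis unfolding d unfolding cmod_power2 by (simp add: power2_eq_square field_simps)
qed

lemma P2: fixes a b c d :: complex shows
 "(cmod ((a + 1 * b)/sq2))\<^sup>2 * (cmod ((c + 1 * d)/sq2))\<^sup>2 + (cmod ((a + (-1) * b)/sq2))\<^sup>2 * (cmod ((c + (-1) * d)/sq2))\<^sup>2
  + (cmod ((a + \<i> * b)/sq2))\<^sup>2 * (cmod ((c + \<i> * d)/sq2))\<^sup>2 + (cmod ((a + (-\<i>) * b)/sq2))\<^sup>2 * (cmod ((c + (-\<i>) * d)/sq2))\<^sup>2
  = ((cmod a)\<^sup>2 + (cmod b)\<^sup>2) * ((cmod c)\<^sup>2 + (cmod d)\<^sup>2) + 2 * Re (a * cnj b * cnj c * d)"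
proof -
  have d: "\<And>z. (cmod (z/sq2))\<^sup>2 = (cmod z)\<^sup>2 / 2"
    by (simp add: norm_divide sq2_def power_divide)
  show ?thesis unfolding d unfolding cmod_power2 by (simp add: power2_eq_square field_simps)
qed


lemma rot_meas: "rot i k w \<in> borel_measurable borel"
  by (rule borel_measurable_continuous_onI[OF rot_cont])

lemma rot_unitary_U: assumes "i \<noteq> k" "w * cnj w = 1" "unitary_mat U"
  shows "unitary_mat (rot i k w U)"
  using unitary_mult[OF rot_unitary[OF assms(1,2)] assms(3)] by (simp flip: rot_mult)

locale haar =
  fixes M :: "(complex^'n::finite^'n) measure"
  assumes haar: "haar_unitary M"
begin

lemma prob: "prob_space M" using haar by (simp add: haar_unitary_def)
lemma sets_M: "sets M = sets borel" using haar by (simp add: haar_unitary_def)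
lemma AE_unitary: "AE U in M. unitary_mat U" using haar by (simp add: haar_unitary_def)

lemma meas: "f \<in> borel_measurable borel \<Longrightarrow> f \<in> borel_measurable M"
  using measurable_cong_sets[OF sets_M refl] by blast

lemma invariance: assumes "i \<noteq> k" "w * cnj w = 1" "f \<in> borel_measurable borel"
  shows "integral\<^sup>L M (f::_ \<Rightarrow> real) = integral\<^sup>L M (\<lambda>U. f (rot i k w U))"
proof -
  let ?V = "rot i k w (mat 1) :: complex^'n^'n"
  have d: "distr M M (\<lambda>U. ?V ** U) = M"
    using haar rot_unitary[OF assms(1,2)] unfolding haar_unitary_def by blast
  have e: "(\<lambda>U. ?V ** U) = rot i k w" by (rule ext) (simp flip: rot_mult)
  have dm: "distr M M (rot i k w) = M" using d unfolding e .
  have rm: "rot i k w \<in> measurable M M"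
    using measurable_cong_sets[OF sets_M sets_M] rot_meas by blast
  have fm: "f \<in> borel_measurable M" using assms(3) by (rule meas)
  have "integral\<^sup>L M f = integral\<^sup>L (distr M M (rot i k w)) f" using dm by simp
  also have "\<dots> = integral\<^sup>L M (\<lambda>U. f (rot i k w U))" by (rule integral_distr[OF rm fm])
  finally show ?thesis .
qed

lemma intg: assumes "f \<in> borel_measurable borel" "\<And>U. unitary_mat U \<Longrightarrow> \<bar>f U\<bar> \<le> B"
  shows "integrable M (f :: _ \<Rightarrow> real)"
proof -
  interpret prob_space M by (rule prob)
  show ?thesis
  proof (rule integrable_const_bound[where B=B])
    show "AE x in M. norm (f x) \<le> B" using AE_unitary by eventually_elim (simp add: assms(2))
    show "f \<in> borel_measurable M" using assms(1) by (rule meas)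
  qed
qed

lemma avg4: fixes f :: "_ \<Rightarrow> real" and B :: real assumes "i \<noteq> k" "f \<in> borel_measurable borel" "\<And>U. unitary_mat U \<Longrightarrow> \<bar>f U\<bar> \<le> B"
  shows "4 * integral\<^sup>L M f = integral\<^sup>L M (\<lambda>U. f (rot i k 1 U) + f (rot i k (-1) U) + f (rot i k \<i> U) + f (rot i k (-\<i>) U))"
proof -
  have I: "\<And>w. w * cnj w = 1 \<Longrightarrow> integrable M (\<lambda>U. f (rot i k w U))"
    using assms by (intro intg[where B=B]) (auto intro: measurable_compose[OF rot_meas] rot_unitary_U)
  have u: "(1::complex) * cnj 1 = 1" "(-1::complex) * cnj (-1) = 1" "\<i> * cnj \<i> = 1" "(-\<i>) * cnj (-\<i>) = 1"
    by simp_all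
  have "integral\<^sup>L M (\<lambda>U. f (rot i k 1 U) + f (rot i k (-1) U) + f (rot i k \<i> U) + f (rot i k (-\<i>) U))
     = integral\<^sup>L M (\<lambda>U. f (rot i k 1 U)) + integral\<^sup>L M (\<lambda>U. f (rot i k (-1) U)) + integral\<^sup>L M (\<lambda>U. f (rot i k \<i> U)) + integral\<^sup>L M (\<lambda>U. f (rot i k (-\<i>) U))"
    using I[OF u(1)] I[OF u(2)] I[OF u(3)] I[OF u(4)] by simp
  also have "\<dots> = 4 * integral\<^sup>L M f"
    using invariance[OF assms(1) u(1) assms(2)] invariance[OF assms(1) u(2) assms(2)]
      invariance[OF assms(1) u(3) assms(2)] invariance[OF assms(1) u(4) assms(2)] by simp
  finally show ?thesis by simp
qed

end

lemma rot_i: "rot i k w U $ i $ s = (U$i$s + w * U$k$s)/sq2" by (simp add: rot_def)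
lemma rot_o: "r \<noteq> i \<Longrightarrow> r \<noteq> k \<Longrightarrow> rot i k w U $ r $ s = U$r$s" by (simp add: rot_def)

lemma cmod_mult_cnj: "Re (a * cnj a * cnj c * c) = (cmod a)\<^sup>2 * (cmod c)\<^sup>2"
  unfolding cmod_power2 by (simp add: algebra_simps power2_eq_square)
lemma cmod_mult_cnj2: "Re (a * cnj b * cnj a * b) = (cmod a)\<^sup>2 * (cmod b)\<^sup>2"
  unfolding cmod_power2 by (simp add: algebra_simps power2_eq_square)
lemma Re_swap: "Re (b * cnj a * cnj d * c) = Re (a * cnj b * cnj c * d)"
  by (simp add: algebra_simps)

lemma bnd4: assumes "cmod a \<le> 1" "cmod b \<le> 1" "cmod c \<le> 1" "cmod d \<le> 1"
  shows "\<bar>Re (a * cnj b * cnj c * d)\<bar> \<le> 1"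
proof -
  have "\<bar>Re (a * cnj b * cnj c * d)\<bar> \<le> cmod (a * cnj b * cnj c * d)" by (rule abs_Re_le_cmod)
  also have "\<dots> = cmod a * cmod b * cmod c * cmod d" by (simp add: norm_mult)
  also have "\<dots> \<le> 1" using assms by (simp add: mult_le_one)
  finally show ?thesis .
qed

context haar begin

definition F2 where "F2 i j = integral\<^sup>L M (\<lambda>U. (cmod (U$i$j))\<^sup>2)"
definition G where "G i j k l = integral\<^sup>L M (\<lambda>U. (cmod (U$i$j))\<^sup>2 * (cmod (U$k$l))\<^sup>2)"
definition H where "H i j k l = integral\<^sup>L M (\<lambda>U. Re (U$i$j * cnj (U$k$j) * cnj (U$i$l) * U$k$l))"

lemma mF: "(\<lambda>U::complex^'n^'n. (cmod (U$i$j))\<^sup>2) \<in> borel_measurable borel"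
  by (intro borel_measurable_continuous_onI continuous_intros)
lemma mG: "(\<lambda>U::complex^'n^'n. (cmod (U$i$j))\<^sup>2 * (cmod (U$k$l))\<^sup>2) \<in> borel_measurable borel"
  by (intro borel_measurable_continuous_onI continuous_intros)
lemma mH: "(\<lambda>U::complex^'n^'n. Re (U$i$j * cnj (U$k$j) * cnj (U$i$l) * U$k$l)) \<in> borel_measurable borel"
  by (intro borel_measurable_continuous_onI continuous_intros)

lemma bF: "unitary_mat U \<Longrightarrow> \<bar>(cmod (U$i$j))\<^sup>2\<bar> \<le> 1"
  using unitary_entry_le[of U i j] by (simp add: power_le_one)
lemma bG: "unitary_mat U \<Longrightarrow> \<bar>(cmod (U$i$j))\<^sup>2 * (cmod (U$k$l))\<^sup>2\<bar> \<le> 1"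
  using unitary_entry_le[of U i j] unitary_entry_le[of U k l] by (simp add: power_le_one mult_le_one)
lemma bH: "unitary_mat U \<Longrightarrow> \<bar>Re (U$i$j * cnj (U$k$j) * cnj (U$i$l) * U$k$l)\<bar> \<le> 1"
  by (intro bnd4 unitary_entry_le)

lemma iF[simp]: "integrable M (\<lambda>U. (cmod (U$i$j))\<^sup>2)" by (rule intg[OF mF bF])
lemma iG[simp]: "integrable M (\<lambda>U. (cmod (U$i$j))\<^sup>2 * (cmod (U$k$l))\<^sup>2)" by (rule intg[OF mG bG])
lemma iH[simp]: "integrable M (\<lambda>U. Re (U$i$j * cnj (U$k$j) * cnj (U$i$l) * U$k$l))" by (rule intg[OF mH bH])

lemma R1: assumes "i \<noteq> k" shows "F2 i j = F2 k j"
proof -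
  have "4 * F2 i j = integral\<^sup>L M (\<lambda>U. (cmod (rot i k 1 U $ i $ j))\<^sup>2 + (cmod (rot i k (- 1) U $ i $ j))\<^sup>2 +
        (cmod (rot i k \<i> U $ i $ j))\<^sup>2 + (cmod (rot i k (- \<i>) U $ i $ j))\<^sup>2)"
    unfolding F2_def by (rule avg4[OF assms mF]) (rule bF)
  also have "\<dots> = integral\<^sup>L M (\<lambda>U. 2 * ((cmod (U$i$j))\<^sup>2 + (cmod (U$k$j))\<^sup>2))"
    by (intro Bochner_Integration.integral_cong refl) (simp only: rot_i P1)
  also have "\<dots> = 2 * F2 i j + 2 * F2 k j" by (simp add: F2_def)
  finally show ?thesis by simp
qed

lemma R2: assumes "i \<noteq> k"
  shows "4 * G i j i l = G i j i l + G i j k l + G k j i l + G k j k l + 2 * H i j k l"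
proof -
  have "4 * G i j i l = integral\<^sup>L M (\<lambda>U. (cmod (rot i k 1 U $ i $ j))\<^sup>2 * (cmod (rot i k 1 U $ i $ l))\<^sup>2 +
        (cmod (rot i k (- 1) U $ i $ j))\<^sup>2 * (cmod (rot i k (- 1) U $ i $ l))\<^sup>2 +
        (cmod (rot i k \<i> U $ i $ j))\<^sup>2 * (cmod (rot i k \<i> U $ i $ l))\<^sup>2 +
        (cmod (rot i k (- \<i>) U $ i $ j))\<^sup>2 * (cmod (rot i k (- \<i>) U $ i $ l))\<^sup>2)"
    unfolding G_def by (rule avg4[OF assms mG]) (rule bG)
  also have "\<dots> = integral\<^sup>L M (\<lambda>U. ((cmod (U$i$j))\<^sup>2 + (cmod (U$k$j))\<^sup>2) * ((cmod (U$i$l))\<^sup>2 + (cmod (U$k$l))\<^sup>2)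
       + 2 * Re (U$i$j * cnj (U$k$j) * cnj (U$i$l) * U$k$l))"
    by (intro Bochner_Integration.integral_cong refl) (simp only: rot_i P2)
  also have "\<dots> = integral\<^sup>L M (\<lambda>U. (cmod (U$i$j))\<^sup>2 * (cmod (U$i$l))\<^sup>2 + (cmod (U$i$j))\<^sup>2 * (cmod (U$k$l))\<^sup>2
       + (cmod (U$k$j))\<^sup>2 * (cmod (U$i$l))\<^sup>2 + (cmod (U$k$j))\<^sup>2 * (cmod (U$k$l))\<^sup>2
       + 2 * Re (U$i$j * cnj (U$k$j) * cnj (U$i$l) * U$k$l))"
    by (simp add: algebra_simps)
  also have "\<dots> = G i j i l + G i j k l + G k j i l + G k j k l + 2 * H i j k l"
    by (simp only: G_def H_def Bochner_Integration.integral_add integral_mult_right_zero iG iH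
        Bochner_Integration.integrable_add integrable_mult_right)
  finally show ?thesis .
qed

lemma R3: assumes "i \<noteq> k" "m \<noteq> i" "m \<noteq> k"
  shows "G i j m l = G k j m l"
proof -
  have "4 * G i j m l = integral\<^sup>L M (\<lambda>U. (cmod (rot i k 1 U $ i $ j))\<^sup>2 * (cmod (rot i k 1 U $ m $ l))\<^sup>2 +
          (cmod (rot i k (- 1) U $ i $ j))\<^sup>2 * (cmod (rot i k (- 1) U $ m $ l))\<^sup>2 +
          (cmod (rot i k \<i> U $ i $ j))\<^sup>2 * (cmod (rot i k \<i> U $ m $ l))\<^sup>2 +
          (cmod (rot i k (- \<i>) U $ i $ j))\<^sup>2 * (cmod (rot i k (- \<i>) U $ m $ l))\<^sup>2)"
    unfolding G_def by (rule avg4[OF assms(1) mG]) (rule bG)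
  also have "\<dots> = integral\<^sup>L M (\<lambda>U. 2 * ((cmod (U$i$j))\<^sup>2 + (cmod (U$k$j))\<^sup>2) * (cmod (U$m$l))\<^sup>2)"
  proof (intro Bochner_Integration.integral_cong refl)
    fix U :: "complex^'n^'n"
    show "(cmod (rot i k 1 U $ i $ j))\<^sup>2 * (cmod (rot i k 1 U $ m $ l))\<^sup>2 +
          (cmod (rot i k (- 1) U $ i $ j))\<^sup>2 * (cmod (rot i k (- 1) U $ m $ l))\<^sup>2 +
          (cmod (rot i k \<i> U $ i $ j))\<^sup>2 * (cmod (rot i k \<i> U $ m $ l))\<^sup>2 +
          (cmod (rot i k (- \<i>) U $ i $ j))\<^sup>2 * (cmod (rot i k (- \<i>) U $ m $ l))\<^sup>2 =
          2 * ((cmod (U $ i $ j))\<^sup>2 + (cmod (U $ k $ j))\<^sup>2) * (cmod (U $ m $ l))\<^sup>2"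
      using P1[of "U$i$j" "U$k$j"] unfolding rot_i rot_o[OF assms(2,3)]
      by (simp only: distrib_right[symmetric]) 
  qed
  also have "\<dots> = 2 * G i j m l + 2 * G k j m l" by (simp add: G_def algebra_simps)
  finally show ?thesis by simp
qed

end

context haar begin

lemma AEeq: assumes "continuous_on UNIV f" "continuous_on UNIV g" "\<And>U. unitary_mat U \<Longrightarrow> f U = g U"
  shows "integral\<^sup>L M f = integral\<^sup>L M (g :: _ \<Rightarrow> real)"
proof (rule integral_cong_AE)
  show "f \<in> borel_measurable M" "g \<in> borel_measurable M"
    using assms(1,2) by (auto intro: meas borel_measurable_continuous_onI)
  show "AE x in M. f x = g x" using AE_unitary by eventually_elim (rule assms(3))
qed

lemma SF: "(\<Sum>i\<in>UNIV. F2 i j) = 1"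
proof -
  interpret prob_space M by (rule prob)
  have "(\<Sum>i\<in>UNIV. F2 i j) = integral\<^sup>L M (\<lambda>U. \<Sum>i\<in>UNIV. (cmod (U$i$j))\<^sup>2)"
    by (simp add: F2_def)
  also have "\<dots> = integral\<^sup>L M (\<lambda>U. 1)"
    by (rule AEeq) (auto intro!: continuous_intros simp: unitary_colnorm)
  also have "\<dots> = 1" by (simp add: prob_space)
  finally show ?thesis .
qed

lemma SG1: "(\<Sum>k\<in>UNIV. G i j k l) = F2 i j"
proof -
  have "(\<Sum>k\<in>UNIV. G i j k l) = integral\<^sup>L M (\<lambda>U. \<Sum>k\<in>UNIV. (cmod (U$i$j))\<^sup>2 * (cmod (U$k$l))\<^sup>2)"
    by (simp add: G_def)
  also have "\<dots> = F2 i j" unfolding F2_def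
    by (rule AEeq) (auto intro!: continuous_intros simp: unitary_colnorm simp flip: sum_distrib_left)
  finally show ?thesis .
qed

lemma SG2: "(\<Sum>i\<in>UNIV. G i j k l) = F2 k l"
proof -
  have "(\<Sum>i\<in>UNIV. G i j k l) = integral\<^sup>L M (\<lambda>U. \<Sum>i\<in>UNIV. (cmod (U$i$j))\<^sup>2 * (cmod (U$k$l))\<^sup>2)"
    by (simp add: G_def)
  also have "\<dots> = F2 k l" unfolding F2_def
    by (rule AEeq) (auto intro!: continuous_intros simp: unitary_colnorm simp flip: sum_distrib_right)
  finally show ?thesis .
qed

lemma SH: assumes "j \<noteq> l" shows "(\<Sum>i\<in>UNIV. \<Sum>k\<in>UNIV. H i j k l) = 0"
proof -
  have "(\<Sum>i\<in>UNIV. \<Sum>k\<in>UNIV. H i j k l) = integral\<^sup>L M (\<lambda>U. \<Sum>i\<in>UNIV. \<Sum>k\<in>UNIV. Re (U$i$j * cnj (U$k$j) * cnj (U$i$l) * U$k$l))"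
  proof -
    have e1: "integral\<^sup>L M (\<lambda>U. \<Sum>k\<in>UNIV. Re (U$i$j * cnj (U$k$j) * cnj (U$i$l) * U$k$l))
       = (\<Sum>k\<in>UNIV. H i j k l)" for i unfolding H_def by (rule Bochner_Integration.integral_sum[where f="\<lambda>k U. Re (U$i$j * cnj (U$k$j) * cnj (U$i$l) * U$k$l)"]) (rule iH)
    have e2: "integral\<^sup>L M (\<lambda>U. \<Sum>i\<in>UNIV. \<Sum>k\<in>UNIV. Re (U$i$j * cnj (U$k$j) * cnj (U$i$l) * U$k$l))
      = (\<Sum>i\<in>UNIV. integral\<^sup>L M (\<lambda>U. \<Sum>k\<in>UNIV. Re (U$i$j * cnj (U$k$j) * cnj (U$i$l) * U$k$l)))"
      by (rule Bochner_Integration.integral_sum[where f="\<lambda>i U. \<Sum>k\<in>UNIV. Re (U$i$j * cnj (U$k$j) * cnj (U$i$l) * U$k$l)"])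
         (intro Bochner_Integration.integrable_sum iH)
    show ?thesis by (simp only: e1 e2)
  qed
  also have "\<dots> = integral\<^sup>L M (\<lambda>U. 0)"
  proof (rule AEeq)
    fix U :: "complex^'n^'n" assume u: "unitary_mat U"
    have "(\<Sum>i\<in>UNIV. \<Sum>k\<in>UNIV. Re (U$i$j * cnj (U$k$j) * cnj (U$i$l) * U$k$l))
      = Re ((\<Sum>i\<in>UNIV. U$i$j * cnj (U$i$l)) * (\<Sum>k\<in>UNIV. cnj (U$k$j) * U$k$l))"
      by (simp add: sum_product Re_sum algebra_simps)
    also have "\<dots> = 0" using unitary_col[OF u, of j l] assms by simp
    finally show "(\<Sum>i\<in>UNIV. \<Sum>k\<in>UNIV. Re (U$i$j * cnj (U$k$j) * cnj (U$i$l) * U$k$l)) = 0" .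
  qed (auto intro!: continuous_intros)
  also have "\<dots> = 0" by simp
  finally show ?thesis .
qed

lemma HG_diag: "H i j i l = G i j i l"
  unfolding H_def G_def by (simp only: cmod_mult_cnj)
lemma HG_col: "H i j k j = G i j k j"
  unfolding H_def G_def by (simp only: cmod_mult_cnj2)
lemma H_swap: "H k j i l = H i j k l"
  unfolding H_def by (simp only: Re_swap)
lemma G_comm: "G k j i j = G i j k j"
  unfolding G_def by (simp only: mult.commute)

end

lemma sum_rem: "(\<Sum>x\<in>UNIV. f x) = f m + (\<Sum>x\<in>UNIV-{m}. f x :: real)" for f :: "'n::finite \<Rightarrow> real"
  by (simp add: sum.remove)

lemma sum_exc: fixes f :: "'n::finite \<Rightarrow> real"
  assumes "\<And>x. x \<noteq> m \<Longrightarrow> f x = D"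
  shows "(\<Sum>x\<in>UNIV-{m}. f x) = (real CARD('n) - 1) * D"
proof -
  have "(\<Sum>x\<in>UNIV-{m}. f x) = (\<Sum>x\<in>UNIV-{m}. D)" using assms by (intro sum.cong) auto
  also have "\<dots> = real (card (UNIV - {m} :: 'n set)) * D" by simp
  also have "card (UNIV - {m} :: 'n set) = CARD('n) - 1" by (simp add: card_Diff_singleton)
  also have "real (CARD('n) - 1) = real CARD('n) - 1"
    using card_ge_0_finite[of "UNIV :: 'n set"] by (simp add: of_nat_diff)
  finally show ?thesis .
qed

lemma solve1: fixes x n :: real assumes "x + (n-1)*(x/2) = 1/n" "n \<ge> 2" shows "x = 2/(n*(n+1))"
proof -
  have "n * (x + (n-1)*(x/2)) = 1" using assms by simp
  moreover have "2*(n*(x + (n-1)*(x/2))) = x*(n*(n+1))" by (simp add: field_simps)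
  ultimately have "x * (n*(n+1)) = 2" by simp
  moreover have "n*(n+1) \<noteq> 0" using assms(2) by simp
  ultimately show ?thesis by (simp add: field_simps)
qed

lemma solve2: fixes c n :: real assumes "n*((n-1)*(2*c)) = 2 - 4*n*c" "n \<ge> 2" shows "c = 1/(n*(n+1))"
proof -
  have "c * (2*(n*(n+1))) = 2" using assms(1) by (simp add: algebra_simps)
  hence "c * (n*(n+1)) = 1" by simp
  moreover have "n > 0" "n + 1 > 0" using assms(2) by linarith+
  hence "n*(n+1) \<noteq> 0" by simp
  ultimately show ?thesis by (simp add: field_simps)
qed

lemma solve3: fixes c n D :: real assumes "c + (n-1)*D = 1/n" "c = 1/(n*(n+1))" "n \<ge> 2" shows "D = 1/(n^2-1)"
proof -
  have p: "n > 0" "n + 1 > 0" "n - 1 > 0" "n + n*n > 0" using assms(3) by (linarith, linarith, linarith, simp add: add_pos_pos)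
  have "(n-1)*D = 1/n - 1/(n*(n+1))" using assms by simp
  also have "\<dots> = 1/(n+1)" using p by (simp add: field_simps)
  finally have "(n-1)*D = 1/(n+1)" .
  hence "(n+1)*((n-1)*D) = (n+1)*(1/(n+1))" by simp
  also have "\<dots> = 1" using p by simp
  finally have "D*((n+1)*(n-1)) = 1" by (simp add: mult_ac)
  moreover have "(n+1)*(n-1) \<noteq> 0" using p by simp
  ultimately have "D = 1/((n+1)*(n-1))" by (simp add: eq_divide_eq)
  also have "(n+1)*(n-1) = n^2-1" by (simp add: algebra_simps power2_eq_square)
  finally show ?thesis .
qed

locale haar2 = haar M for M :: "(complex^'n::finite^'n) measure" +
  assumes n2: "CARD('n) \<ge> 2"
begin


lemma other: "\<exists>x::'n. x \<noteq> m"
proof (rule ccontr)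
  assume "\<not> ?thesis" hence "(UNIV :: 'n set) = {m}" by auto
  hence "card (UNIV :: 'n set) = card {m}" by (rule arg_cong)
  hence "CARD('n) = 1" by simp
  with n2 show False by simp
qed

lemma F_val: "F2 i j = 1 / real CARD('n)"
proof -
  have "(\<Sum>x\<in>UNIV. F2 x j) = (\<Sum>x\<in>(UNIV::'n set). F2 i j)"
    by (intro sum.cong refl) (metis R1)
  hence "real CARD('n) * F2 i j = 1" using SF[of j] by simp
  thus ?thesis using n2 by (simp add: field_simps)
qed

lemma same_col: "G i j i j = 2 / (real CARD('n) * (real CARD('n) + 1)) \<and> (\<forall>k. k \<noteq> i \<longrightarrow> G i j k j = 1 / (real CARD('n) * (real CARD('n) + 1)))"
proof -
  have ab: "G i j i j = G k j k j \<and> 2 * G i j k j = G i j i j" if "i \<noteq> k" for i k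
  proof -
    have 1: "4 * G i j i j = G i j i j + G i j k j + G k j i j + G k j k j + 2 * H i j k j" by (rule R2[OF that])
    have 2: "4 * G k j k j = G k j k j + G k j i j + G i j k j + G i j i j + 2 * H k j i j" by (rule R2) (use that in auto)
    have 3: "G k j i j = G i j k j" "H i j k j = G i j k j" "H k j i j = G i j k j"
      by (simp_all add: G_comm HG_col)
    show ?thesis using 1 2 3 by linarith
  qed
  have "(\<Sum>k\<in>UNIV. G i j k j) = G i j i j + (real CARD('n) - 1) * (G i j i j / 2)"
  proof -
    have h: "G i j x j = G i j i j / 2" if "x \<noteq> i" for x
    proof -
      have "2 * G i j x j = G i j i j" using ab[of i x] that by blast
      thus ?thesis by simp
    qed
    show ?thesis by (subst sum_rem[of _ i], subst sum_exc[where D="G i j i j / 2"]) (use h in auto)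
  qed
  hence "G i j i j + (real CARD('n) - 1) * (G i j i j / 2) = 1 / real CARD('n)" using SG1[of i j j] F_val by simp
  hence a: "G i j i j = 2 / (real CARD('n) * (real CARD('n) + 1))" using n2 by (intro solve1) auto
  show ?thesis
  proof (intro conjI allI impI)
    fix k assume "k \<noteq> i"
    hence "2 * G i j k j = G i j i j" using ab[of i k] by blast
    hence "G i j k j = G i j i j / 2" by simp
    thus "G i j k j = 1 / (real CARD('n) * (real CARD('n) + 1))" using a by simp
  qed (rule a)
qed

lemma diag_diff: assumes "j \<noteq> l" shows "G i j i l = 1 / (real CARD('n) * (real CARD('n) + 1))"
proof -
  have cc: "G i j i l = G k j k l" for i k
  proof (cases "i = k")
    case False
    have 1: "4 * G i j i l = G i j i l + G i j k l + G k j i l + G k j k l + 2 * H i j k l" by (rule R2[OF False])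
    have 2: "4 * G k j k l = G k j k l + G k j i l + G i j k l + G i j i l + 2 * H k j i l" by (rule R2) (use False in auto)
    have 3: "H k j i l = H i j k l" by (rule H_swap)
    show ?thesis using 1 2 3 by linarith
  qed simp
  have pair: "G i j k l + G k j i l + 2 * H i j k l = 2 * G i j i l" if "i \<noteq> k" for i k
    using R2[OF that, of j l] cc[of i k] by linarith
  define c where "c = G i j i l"
  define S where "S = (\<Sum>a\<in>UNIV. \<Sum>b\<in>UNIV-{a}. G a j b l + G b j a l + 2 * H a j b l)"
  have Sa: "S = real CARD('n) * ((real CARD('n) - 1) * (2 * c))"
  proof -
    have "(\<Sum>b\<in>UNIV-{a}. G a j b l + G b j a l + 2 * H a j b l) = (real CARD('n) - 1) * (2 * c)" for a
      by (rule sum_exc) (simp add: pair c_def cc[of a i])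
    thus ?thesis by (simp add: S_def)
  qed
  have Sb: "S = 2 - 4 * real CARD('n) * c"
  proof -
    have e: "(\<Sum>b\<in>UNIV-{a}. G a j b l + G b j a l + 2 * H a j b l)
        = 2 / real CARD('n) - 4 * c + 2 * (\<Sum>b\<in>UNIV. H a j b l)" for a
    proof -
      have "(\<Sum>b\<in>UNIV-{a}. G a j b l + G b j a l + 2 * H a j b l)
          = (\<Sum>b\<in>UNIV-{a}. G a j b l) + (\<Sum>b\<in>UNIV-{a}. G b j a l) + 2 * (\<Sum>b\<in>UNIV-{a}. H a j b l)"
        by (simp add: sum.distrib sum_distrib_left)
      also have "(\<Sum>b\<in>UNIV-{a}. G a j b l) = F2 a j - c"
        using sum_rem[of "\<lambda>b. G a j b l" a] SG1[of a j l] cc[of a i] by (simp add: c_def)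
      also have "(\<Sum>b\<in>UNIV-{a}. G b j a l) = F2 a l - c"
        using sum_rem[of "\<lambda>b. G b j a l" a] SG2[of j a l] cc[of a i] by (simp add: c_def)
      also have "(\<Sum>b\<in>UNIV-{a}. H a j b l) = (\<Sum>b\<in>UNIV. H a j b l) - c"
        using sum_rem[of "\<lambda>b. H a j b l" a] HG_diag[of a j l] cc[of a i] by (simp add: c_def)
      finally show ?thesis by (simp add: F_val)
    qed
    have "S = (\<Sum>a\<in>(UNIV::'n set). 2 / real CARD('n) - 4 * c + 2 * (\<Sum>b\<in>UNIV. H a j b l))"
      unfolding S_def by (simp only: e)
    also have "\<dots> = (\<Sum>a\<in>(UNIV::'n set). 2 / real CARD('n) - 4 * c) + 2 * (\<Sum>a\<in>UNIV. \<Sum>b\<in>UNIV. H a j b l)"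
      by (simp only: sum.distrib sum_distrib_left)
    also have "\<dots> = 2 - 4 * real CARD('n) * c" using SH[OF assms] n2 by (simp add: field_simps)
    finally show ?thesis .
  qed
  have "c = 1 / (real CARD('n) * (real CARD('n) + 1))"
    by (rule solve2) (use Sa Sb n2 in auto)
  thus ?thesis by (simp add: c_def)
qed

lemma off_diff: assumes "j \<noteq> l" "i \<noteq> m" shows "G i j m l = 1 / ((real CARD('n))^2 - 1)"
proof -
  obtain i0 where i0: "i0 \<noteq> m" using other by blast
  have eq: "G x j m l = G i0 j m l" if "x \<noteq> m" for x
    using R3[of x i0 m j l] that i0 by (cases "x = i0") auto
  have "(\<Sum>x\<in>UNIV. G x j m l) = G m j m l + (real CARD('n) - 1) * G i0 j m l"
    by (subst sum_rem[of _ m], subst sum_exc[where D="G i0 j m l"]) (use eq in auto)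
  hence "G m j m l + (real CARD('n) - 1) * G i0 j m l = 1 / real CARD('n)"
    using SG2[of j m l] F_val by simp
  hence "G i0 j m l = 1 / ((real CARD('n))^2 - 1)"
    by (rule solve3) (use diag_diff[OF assms(1)] n2 in auto)
  thus ?thesis using eq[OF assms(2)] by simp
qed

lemma G_val: "G i j k l = (if i = k then (if j = l then 2 / (real CARD('n) * (real CARD('n) + 1))
   else 1 / (real CARD('n) * (real CARD('n) + 1)))
   else (if j = l then 1 / (real CARD('n) * (real CARD('n) + 1)) else 1 / ((real CARD('n))^2 - 1)))"
  using same_col[of i j] diag_diff[of j l i] off_diff[of j l i k] by auto

end

lemma alg: fixes x d A B p p' q q' :: real assumes "x \<noteq> 0" "d \<noteq> 0"
  shows "A*B/d - A*q*q'/(x*d) - p*p'*B/(x*d) + p*p'*q*q'/(x^2*d) = (x^2/d) * ((A/x)*(B/x) - (A/x)*(q/x)*(q'/x) - (p/x)*(p'/x)*(B/x) + (p/x)*(p'/x)*(q/x)*(q'/x))"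
  using assms by (simp add: field_simps power2_eq_square)

lemma cov_formula_alt: assumes "n \<ge> 2"
  shows "cov_formula n p q p' q' = (real n^2 / (real n^2 - 1)) *
    (min (real p / real n) (real p' / real n) * min (real q / real n) (real q' / real n)
     - min (real p / real n) (real p' / real n) * (real q / real n) * (real q' / real n)
     - (real p / real n) * (real p' / real n) * min (real q / real n) (real q' / real n)
     + (real p / real n) * (real p' / real n) * (real q / real n) * (real q' / real n))"
proof -
  have n0: "real n > 0" using assms by simp
  have n1: "real n^2 - 1 > 0"
  proof -
    have "real n^2 \<ge> 2^2" using assms by (intro power_mono) auto
    thus ?thesis by simp
  qed
  have m: "min (real a / real n) (real b / real n) = real (min a b) / real n" for a b
    using n0 by (simp add: min_def divide_le_cancel)
  show ?thesis unfolding m cov_formula_def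
    by (rule alg) (use n0 n1 in auto)
qed

lemma n2_lim: "(\<lambda>n. real n^2 / (real n^2 - 1)) \<longlonglongrightarrow> 1"
proof -
  have "(\<lambda>n. inverse (1 - (1 / real n) * (1 / real n))) \<longlonglongrightarrow> inverse (1 - 0 * 0)"
    by (intro tendsto_intros lim_inverse_n') simp
  hence L: "(\<lambda>n. inverse (1 - (1 / real n) * (1 / real n))) \<longlonglongrightarrow> 1" by simp
  show ?thesis
  proof (rule Lim_transform_eventually[OF L])
    show "\<forall>\<^sub>F n in sequentially. inverse (1 - (1 / real n) * (1 / real n)) = real n^2 / (real n^2 - 1)"
    proof (rule eventually_sequentiallyI[of 2])
      fix n :: nat assume "n \<ge> 2"
      hence n0: "real n > 0" by simp
      hence "real n * real n \<noteq> 0" by simp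
      thus "inverse (1 - (1 / real n) * (1 / real n)) = real n^2 / (real n^2 - 1)"
        using n0 by (simp add: field_simps power2_eq_square)
    qed
  qed
qed

lemma lim_part:
  "(\<forall>(P::nat \<Rightarrow> nat) (Q::nat \<Rightarrow> nat) (P'::nat \<Rightarrow> nat) (Q'::nat \<Rightarrow> nat) (s::real) t s' t'.
         (\<forall>n\<ge>2. 1 \<le> P n \<and> P n \<le> n \<and> 1 \<le> Q n \<and> Q n \<le> n \<and>
              1 \<le> P' n \<and> P' n \<le> n \<and> 1 \<le> Q' n \<and> Q' n \<le> n) \<and>
         (\<lambda>n. real (P n) / real n) \<longlonglongrightarrow> s \<and>
         (\<lambda>n. real (Q n) / real n) \<longlonglongrightarrow> t \<and>
         (\<lambda>n. real (P' n) / real n) \<longlonglongrightarrow> s' \<and>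
         (\<lambda>n. real (Q' n) / real n) \<longlonglongrightarrow> t'
       \<longrightarrow> (\<lambda>n. cov_formula n (P n) (Q n) (P' n) (Q' n))
             \<longlonglongrightarrow> (min s s' - s * s') * (min t t' - t * t'))"
proof (intro allI impI, elim conjE)
  fix P Q P' Q' :: "nat \<Rightarrow> nat" and s t s' t' :: real
  assume a: "(\<lambda>n. real (P n) / real n) \<longlonglongrightarrow> s" "(\<lambda>n. real (Q n) / real n) \<longlonglongrightarrow> t"
     "(\<lambda>n. real (P' n) / real n) \<longlonglongrightarrow> s'" "(\<lambda>n. real (Q' n) / real n) \<longlonglongrightarrow> t'"
  let ?f = "\<lambda>n. (real n^2 / (real n^2 - 1)) *
    (min (real (P n) / real n) (real (P' n) / real n) * min (real (Q n) / real n) (real (Q' n) / real n)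
     - min (real (P n) / real n) (real (P' n) / real n) * (real (Q n) / real n) * (real (Q' n) / real n)
     - (real (P n) / real n) * (real (P' n) / real n) * min (real (Q n) / real n) (real (Q' n) / real n)
     + (real (P n) / real n) * (real (P' n) / real n) * (real (Q n) / real n) * (real (Q' n) / real n))"
  have "?f \<longlonglongrightarrow> 1 * (min s s' * min t t' - min s s' * t * t' - s * s' * min t t' + s * s' * t * t')"
    by (intro tendsto_intros n2_lim a)
  hence L: "?f \<longlonglongrightarrow> (min s s' - s * s') * (min t t' - t * t')" by (simp add: algebra_simps)
  show "(\<lambda>n. cov_formula n (P n) (Q n) (P' n) (Q' n)) \<longlonglongrightarrow> (min s s' - s * s') * (min t t' - t * t')"
  proof (rule Lim_transform_eventually[OF L])
    show "\<forall>\<^sub>F n in sequentially. ?f n = cov_formula n (P n) (Q n) (P' n) (Q' n)"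
      by (rule eventually_sequentiallyI[of 2]) (simp add: cov_formula_alt)
  qed
qed


lemma idx_mono: fixes i i' :: "'n::{finite,linorder}" assumes "i < i'" shows "idx i < idx i'"
  unfolding idx_def by (rule psubset_card_mono) (use assms in auto)

lemma idx_inj: "inj (idx :: 'n::{finite,linorder} \<Rightarrow> nat)"
proof (rule injI)
  fix x y :: 'n assume "idx x = idx y"
  thus "x = y" using idx_mono[of x y] idx_mono[of y x] by (cases x y rule: linorder_cases) auto
qed

lemma idx_lt: "idx (i :: 'n::{finite,linorder}) < CARD('n)"
  unfolding idx_def by (rule psubset_card_mono) auto

lemma idx_range: "range (idx :: 'n::{finite,linorder} \<Rightarrow> nat) = {..<CARD('n)}"
proof (rule card_subset_eq)
  show "range (idx :: 'n \<Rightarrow> nat) \<subseteq> {..<CARD('n)}" by (auto intro: idx_lt)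
  show "card (range (idx :: 'n \<Rightarrow> nat)) = card {..<CARD('n)}" using card_image[OF idx_inj] by simp
qed simp

lemma card_I: assumes "p \<le> CARD('n::{finite,linorder})" shows "card {i::'n. idx i < p} = p"
proof -
  have "{i::'n. idx i < p} = idx -` {..<p}" by auto
  also have "card \<dots> = card {..<p}" using assms by (intro card_vimage_inj idx_inj) (auto simp: idx_range)
  finally show ?thesis by simp
qed

lemma count2: fixes f :: "bool \<Rightarrow> real" assumes "finite I" "finite I'"
  shows "(\<Sum>i\<in>I. \<Sum>k\<in>I'. f (i = k)) = real (card (I \<inter> I')) * f True + (real (card I) * real (card I') - real (card (I \<inter> I'))) * f False"
proof -
  have e: "f (i = k) = f False + (if i = k then f True - f False else 0)" for i k by auto
  have "(\<Sum>i\<in>I. \<Sum>k\<in>I'. f (i = k)) = (\<Sum>i\<in>I. real (card I') * f False + (if i \<in> I' then f True - f False else 0))"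
    unfolding e using assms by (simp add: sum.distrib)
  also have "\<dots> = real (card I) * real (card I') * f False + (\<Sum>i\<in>I. if i \<in> I' then f True - f False else 0)"
    by (simp add: sum.distrib)
  also have "(\<Sum>i\<in>I. if i \<in> I' then f True - f False else 0) = real (card (I \<inter> I')) * (f True - f False)"
    using assms by (simp add: sum.inter_restrict[symmetric])
  finally show ?thesis by (simp add: algebra_simps)
qed


lemma alg2: fixes a d e A B P Q :: real assumes r1: "a = d - e*d" and r2: "d - e*e = e*e*d"
  shows "A * (B * (2 * a) + (Q - B) * a) + (P - A) * (B * a + (Q - B) * d) - P * Q * (e*e)
     = A * B * d - A * Q * (e * d) - P * B * (e * d) + P * Q * (e * e * d)"
proof -
  have "(A * (B * (2 * a) + (Q - B) * a) + (P - A) * (B * a + (Q - B) * d) - P * Q * (e*e))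
     - (A * B * d - A * Q * (e * d) - P * B * (e * d) + P * Q * (e * e * d))
     = (A*Q+P*B)*(a - d + e*d) + P*Q*(d - e*e - e*e*d)" by (simp add: algebra_simps)
  also have "\<dots> = 0" using r1 r2 by simp
  finally show ?thesis by simp
qed

lemma rels: fixes N :: real assumes "N \<ge> 2"
  shows "1/(N*(N+1)) = 1/(N^2-1) - (1/N)*(1/(N^2-1))" "1/(N^2-1) - (1/N)*(1/N) = (1/N)*(1/N)*(1/(N^2-1))"
proof -
  have p: "N \<noteq> 0" "N + 1 \<noteq> 0" "N - 1 \<noteq> 0" using assms by auto
  have q: "N^2 - 1 = (N - 1) * (N + 1)" by (simp add: algebra_simps power2_eq_square)
  have "1/(N^2-1) - (1/N)*(1/(N^2-1)) = (1 - 1/N) / ((N - 1) * (N + 1))" unfolding q by (simp add: algebra_simps diff_divide_distrib)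
  also have "1 - 1/N = (N - 1)/N" using p by (simp add: field_simps)
  also have "(N - 1)/N / ((N - 1) * (N + 1)) = 1/(N*(N+1))" using p by simp
  finally show "1/(N*(N+1)) = 1/(N^2-1) - (1/N)*(1/(N^2-1))" by simp
  have g: "1/(M-1) - 1/M = (1/M)*(1/(M-1))" if "M \<noteq> 0" "M - 1 \<noteq> 0" for M :: real
    using that by (simp add: field_simps)
  have "N^2 \<noteq> 0" "N^2 - 1 \<noteq> 0" using p q by simp_all
  from g[OF this] show "1/(N^2-1) - (1/N)*(1/N) = (1/N)*(1/N)*(1/(N^2-1))"
    by (simp add: power2_eq_square)
qed

lemma inter_I: "{i::'n::{finite,linorder}. idx i < a} \<inter> {i. idx i < b} = {i. idx i < min a b}" by auto

lemma cov_main: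
  fixes M :: "(complex^('a::{finite,linorder})^('a::{finite,linorder})) measure"
  assumes haar: "haar_unitary M" and n2: "CARD('a) \<ge> 2"
    and b: "p \<le> CARD('a)" "q \<le> CARD('a)" "p' \<le> CARD('a)" "q' \<le> CARD('a)"
  shows "covariance M (T_block p q) (T_block p' q') = cov_formula CARD('a) p q p' q'"
proof -
  interpret haar2 M using haar n2 by (simp add: haar2_def haar_def haar2_axioms_def)
  interpret prob_space M by (rule prob)
  define N where "N = real CARD('a)"
  have N2: "N \<ge> 2" using n2 by (simp add: N_def)
  have Tdef: "(T_block a b :: complex^('a::{finite,linorder})^('a::{finite,linorder}) \<Rightarrow> real) = (\<lambda>U. \<Sum>i\<in>{i. idx i < a}. \<Sum>j\<in>{j. idx j < b}. (cmod (U$i$j))\<^sup>2)" for a b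
    by (rule ext) (simp add: T_block_def)
  have iT: "integrable M (T_block a b)" for a b unfolding Tdef by (intro Bochner_Integration.integrable_sum iF)
  have ET: "integral\<^sup>L M (T_block a b) = real a * real b / N" if "a \<le> CARD('a)" "b \<le> CARD('a)" for a b
  proof -
    have "integral\<^sup>L M (T_block a b) = (\<Sum>i\<in>{i::'a. idx i < a}. \<Sum>j\<in>{j::'a. idx j < b}. F2 i j)"
      unfolding Tdef F2_def by simp
    also have "\<dots> = (\<Sum>i\<in>{i::'a. idx i < a}. \<Sum>j\<in>{j::'a. idx j < b}. 1 / N)" by (simp add: F_val N_def)
    also have "\<dots> = real a * real b / N" using card_I[OF that(1)] card_I[OF that(2)] by simp
    finally show ?thesis .
  qed
  let ?I = "{i::'a. idx i < p}" and ?J = "{j::'a. idx j < q}" and ?I' = "{i::'a. idx i < p'}" and ?J' = "{j::'a. idx j < q'}"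
  have TT: "T_block p q U * T_block p' q' U = (\<Sum>i\<in>?I. \<Sum>k\<in>?I'. \<Sum>j\<in>?J. \<Sum>l\<in>?J'. (cmod (U$i$j))\<^sup>2 * (cmod (U$k$l))\<^sup>2)" for U
    by (simp add: T_block_def sum_product)
  have iTT: "integrable M (\<lambda>U. T_block p q U * T_block p' q' U)"
    unfolding TT by (intro Bochner_Integration.integrable_sum iG)
  have ETT: "integral\<^sup>L M (\<lambda>U. T_block p q U * T_block p' q' U) = (\<Sum>i\<in>?I. \<Sum>k\<in>?I'. \<Sum>j\<in>?J. \<Sum>l\<in>?J'. G i j k l)"
    unfolding TT G_def by simp
  define mu where "mu = integral\<^sup>L M (T_block p q)"
  define mu' where "mu' = integral\<^sup>L M (T_block p' q')"
  have "covariance M (T_block p q) (T_block p' q') = integral\<^sup>L M (\<lambda>U. T_block p q U * T_block p' q' U - mu' * T_block p q U - mu * T_block p' q' U + mu * mu')"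
    unfolding covariance_def mu_def[symmetric] mu'_def[symmetric]
    by (intro Bochner_Integration.integral_cong refl) (simp add: algebra_simps)
  also have "\<dots> = integral\<^sup>L M (\<lambda>U. T_block p q U * T_block p' q' U) - mu' * mu - mu * mu' + mu * mu'"
    using iTT iT[of p q] iT[of p' q'] by (simp add: mu_def mu'_def prob_space)
  also have "\<dots> = (\<Sum>i\<in>?I. \<Sum>k\<in>?I'. \<Sum>j\<in>?J. \<Sum>l\<in>?J'. G i j k l) - mu * mu'" by (simp add: ETT)
  finally have C: "covariance M (T_block p q) (T_block p' q') = (\<Sum>i\<in>?I. \<Sum>k\<in>?I'. \<Sum>j\<in>?J. \<Sum>l\<in>?J'. G i j k l) - mu * mu'" .
  define a where "a = 1 / (N * (N + 1))"
  define d where "d = 1 / (N^2 - 1)"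
  define e where "e = 1 / N"
  define gv where "gv b c = (if b then (if c then 2 * a else a) else (if c then a else d))" for b c :: bool
  have Gg: "G i j k l = gv (i = k) (j = l)" for i j k l
    by (simp add: G_val gv_def a_def d_def N_def)
  have cm: "card {j::'a. idx j < x \<and> idx j < y} = min x y" if "x \<le> CARD('a)" "y \<le> CARD('a)" for x y
  proof -
    have "{j::'a. idx j < x \<and> idx j < y} = {j. idx j < min x y}" by auto
    moreover have "card {j::'a. idx j < min x y} = min x y" using that by (intro card_I) simp
    ultimately show ?thesis by simp
  qed
  have cm2: "card ({j::'a. idx j < x} \<inter> {j. idx j < y}) = min x y" if "x \<le> CARD('a)" "y \<le> CARD('a)" for x y
    unfolding inter_I using that by (intro card_I) simp
  have inner: "(\<Sum>j\<in>?J. \<Sum>l\<in>?J'. gv c (j = l)) = real (min q q') * gv c True + (real q * real q' - real (min q q')) * gv c False" for c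
    by (subst count2) (simp_all add: cm cm2 card_I b)
  have outer: "(\<Sum>i\<in>?I. \<Sum>k\<in>?I'. (\<lambda>c. real (min q q') * gv c True + (real q * real q' - real (min q q')) * gv c False) (i = k))
     = real (min p p') * (real (min q q') * gv True True + (real q * real q' - real (min q q')) * gv True False)
       + (real p * real p' - real (min p p')) * (real (min q q') * gv False True + (real q * real q' - real (min q q')) * gv False False)"
    by (subst count2) (simp_all add: cm cm2 card_I b)
  have S: "(\<Sum>i\<in>?I. \<Sum>k\<in>?I'. \<Sum>j\<in>?J. \<Sum>l\<in>?J'. G i j k l)
     = real (min p p') * (real (min q q') * (2 * a) + (real q * real q' - real (min q q')) * a)
       + (real p * real p' - real (min p p')) * (real (min q q') * a + (real q * real q' - real (min q q')) * d)"
  proof -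
    have "(\<Sum>i\<in>?I. \<Sum>k\<in>?I'. \<Sum>j\<in>?J. \<Sum>l\<in>?J'. G i j k l)
      = (\<Sum>i\<in>?I. \<Sum>k\<in>?I'. real (min q q') * gv (i = k) True + (real q * real q' - real (min q q')) * gv (i = k) False)"
      by (simp only: Gg inner)
    also have "\<dots> = real (min p p') * (real (min q q') * gv True True + (real q * real q' - real (min q q')) * gv True False)
       + (real p * real p' - real (min p p')) * (real (min q q') * gv False True + (real q * real q' - real (min q q')) * gv False False)"
      using outer by simp
    finally show ?thesis by (simp add: gv_def)
  qed
  have mm: "mu * mu' = (real p * real p') * (real q * real q') * (e * e)"
    unfolding mu_def mu'_def using ET[OF b(1,2)] ET[OF b(3,4)] by (simp add: e_def)
  have r: "a = d - e * d" "d - e * e = e * e * d"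
    using rels[OF N2] by (simp_all add: a_def d_def e_def)
  have "covariance M (T_block p q) (T_block p' q') =
     real (min p p') * real (min q q') * d - real (min p p') * (real q * real q') * (e * d)
     - (real p * real p') * real (min q q') * (e * d) + (real p * real p') * (real q * real q') * (e * e * d)"
    unfolding C S mm by (rule alg2[OF r])
  also have "\<dots> = cov_formula CARD('a) p q p' q'"
    by (simp add: cov_formula_def d_def e_def N_def power2_eq_square mult.assoc)
  finally show ?thesis .
qed


theorem mainTheorem3:
  fixes M :: "(complex^('n::{finite,linorder})^('n::{finite,linorder})) measure"
    and p q p' q' :: nat
  assumes haar: "haar_unitary M"
    and n2: "CARD('n) \<ge> 2"
    and bounds: "1 \<le> p" "p \<le> CARD('n)" "1 \<le> q" "q \<le> CARD('n)"
                "1 \<le> p'" "p' \<le> CARD('n)" "1 \<le> q'" "q' \<le> CARD('n)"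
  shows "covariance M (T_block p q) (T_block p' q') = cov_formula CARD('n) p q p' q'
    \<and> (\<forall>(P::nat \<Rightarrow> nat) (Q::nat \<Rightarrow> nat) (P'::nat \<Rightarrow> nat) (Q'::nat \<Rightarrow> nat) (s::real) t s' t'.
         (\<forall>n\<ge>2. 1 \<le> P n \<and> P n \<le> n \<and> 1 \<le> Q n \<and> Q n \<le> n \<and>
              1 \<le> P' n \<and> P' n \<le> n \<and> 1 \<le> Q' n \<and> Q' n \<le> n) \<and>
         (\<lambda>n. real (P n) / real n) \<longlonglongrightarrow> s \<and>
         (\<lambda>n. real (Q n) / real n) \<longlonglongrightarrow> t \<and>
         (\<lambda>n. real (P' n) / real n) \<longlonglongrightarrow> s' \<and>
         (\<lambda>n. real (Q' n) / real n) \<longlonglongrightarrow> t'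
       \<longrightarrow> (\<lambda>n. cov_formula n (P n) (Q n) (P' n) (Q' n))
             \<longlonglongrightarrow> (min s s' - s * s') * (min t t' - t * t'))"
  using cov_main[OF haar n2 bounds(2) bounds(4) bounds(6) bounds(8)] lim_part by blast

end
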